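(* Let $\mathcal{H}_{C}=\mathcal{H}_{A}\oplus\mathcal{H}_{B}$ be a finite-dimensional Hilbert space decomposed into two nontrivial orthogonal subspaces with orthogonal projectors $\hat P_{AA},\hat P_{BB}$ ($\hat P_{AA}\hat P_{BB}=0$, $\hat P_{AA}+\hat P_{BB}=\hat I_{CC}$). Let $\Phi_{CC}$ be a quantum channel (completely positive trace-preserving map) on $\mathcal{L}(\mathcal{H}_C)$ with Kraus set $\{\hat M^{(j)}_{CC}\}_j$. Then $\Phi_{CC}$ is a Partially Coherent Direct Sum (PCDS) channel if and only if every Kraus operator is block diagonal, i.e. $\hat M^{(j)}_{CC}=\hat M^{(j)}_{AA}+\hat M^{(j)}_{BB}$ for all $j$, equivalently $\hat M^{(j)}_{AB}=\hat M^{(j)}_{BA}=0$ for all $j$, where $\hat M^{(j)}_{XY}:=\hat P_{XX}\hat M^{(j)}_{CC}\hat P_{YY}$.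
   Context: For $X,Y\in\{A,B\}$ and an operator $\hat\Theta_{CC}$ on $\mathcal{H}_C$ write $\hat\Theta_{XY}:=\hat P_{XX}\hat\Theta_{CC}\hat P_{YY}$, viewed as a linear map $\mathcal{H}_Y\to\mathcal{H}_X$. A channel $\Phi_{CC}$ on $\mathcal{H}_C$ is called PCDS if there exist linear maps $\Phi_{AA}$ on $\mathcal{L}(\mathcal{H}_A)$, $\Phi_{BB}$ on $\mathcal{L}(\mathcal{H}_B)$, $\Phi^{(off)}_{AB}$ on $\mathcal{L}(\mathcal{H}_B\to\mathcal{H}_A)$ and $\Phi^{(off)}_{BA}$ on $\mathcal{L}(\mathcal{H}_A\to\mathcal{H}_B)$ such that for every operator $\hat\Theta_{CC}$, $\Phi_{CC}[\hat\Theta_{CC}]=\Phi_{AA}[\hat\Theta_{AA}]+\Phi_{BB}[\hat\Theta_{BB}]+\Phi^{(off)}_{AB}[\hat\Theta_{AB}]+\Phi^{(off)}_{BA}[\hat\Theta_{BA}]$, i.e. in block form $\begin{pmatrix}\hat\Theta_{AA}&\hat\Theta_{AB}\\ \hat\Theta_{BA}&\hat\Theta_{BB}\end{pmatrix}\mapsto\begin{pmatrix}\Phi_{AA}[\hat\Theta_{AA}]&\Phi^{(off)}_{AB}[\hat\Theta_{AB}]\\ \Phi^{(off)}_{BA}[\hat\Theta_{BA}]&\Phi_{BB}[\hat\Theta_{BB}]\end{pmatrix}$. *)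

theory Defs
  imports "HOL-Analysis.Analysis"
begin

text \<open>Operators on the finite-dimensional Hilbert space H_C = C^'n are complex
  'n x 'n matrices; product is (**), identity is mat 1.\<close>

type_synonym 'n op = "complex^'n^'n"

definition adj :: "'n::finite op \<Rightarrow> 'n op" where
  "adj M = (\<chi> i j. cnj (M $ j $ i))"

definition csc :: "complex \<Rightarrow> 'n::finite op \<Rightarrow> 'n op" where
  "csc c M = (\<chi> i j. c * M $ i $ j)"

definition orth_proj :: "'n::finite op \<Rightarrow> bool" where
  "orth_proj P \<longleftrightarrow> adj P = P \<and> P ** P = P"

definition blk :: "'n::finite op \<Rightarrow> 'n op \<Rightarrow> 'n op \<Rightarrow> 'n op" where
  "blk PX T PY = PX ** T ** PY"

text \<open>The space L(H_Y -> H_X), realised as operators T with P_X T P_Y = T.\<close>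
definition blk_space :: "'n::finite op \<Rightarrow> 'n op \<Rightarrow> 'n op set" where
  "blk_space PX PY = {T. PX ** T ** PY = T}"

definition lin_on_blk :: "'n::finite op \<Rightarrow> 'n op \<Rightarrow> ('n op \<Rightarrow> 'n op) \<Rightarrow> bool" where
  "lin_on_blk PX PY f \<longleftrightarrow>
     (\<forall>T\<in>blk_space PX PY. f T \<in> blk_space PX PY) \<and>
     (\<forall>S\<in>blk_space PX PY. \<forall>T\<in>blk_space PX PY. f (S + T) = f S + f T) \<and>
     (\<forall>c. \<forall>T\<in>blk_space PX PY. f (csc c T) = csc c (f T))"

definition kraus_map :: "'n::finite op list \<Rightarrow> 'n op \<Rightarrow> 'n op" where
  "kraus_map Ms T = (\<Sum>M\<leftarrow>Ms. M ** T ** adj M)"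

definition kraus_set :: "'n::finite op list \<Rightarrow> bool" where
  "kraus_set Ms \<longleftrightarrow> (\<Sum>M\<leftarrow>Ms. adj M ** M) = mat 1"

definition PCDS :: "'n::finite op \<Rightarrow> 'n op \<Rightarrow> ('n op \<Rightarrow> 'n op) \<Rightarrow> bool" where
  "PCDS PA PB \<Phi> \<longleftrightarrow>
     (\<exists>\<Phi>AA \<Phi>BB \<Phi>AB \<Phi>BA.
        lin_on_blk PA PA \<Phi>AA \<and> lin_on_blk PB PB \<Phi>BB \<and>
        lin_on_blk PA PB \<Phi>AB \<and> lin_on_blk PB PA \<Phi>BA \<and>
        (\<forall>T. \<Phi> T = \<Phi>AA (blk PA T PA) + \<Phi>BB (blk PB T PB)
                   + \<Phi>AB (blk PA T PB) + \<Phi>BA (blk PB T PA)))"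

end

theory Submission
  imports Defs
begin

lemma mrd: "((A::'n::finite op) + B) ** C = A ** C + B ** C"
  by (vector matrix_matrix_mult_def sum.distrib[symmetric] field_simps)

lemma adj_mult: "adj ((A::'n::finite op) ** B) = adj B ** adj A"
  by (simp add: adj_def matrix_matrix_mult_def vec_eq_iff mult.commute)

lemma adj_adj: "adj (adj (A::'n::finite op)) = A"
  by (simp add: adj_def vec_eq_iff)

lemma adj_zero: "adj (0::'n::finite op) = 0"
  by (simp add: adj_def vec_eq_iff)

lemma csc_mult: "M ** csc c T ** N = csc c ((M::'n::finite op) ** T ** N)"
  by (simp add: csc_def matrix_matrix_mult_def vec_eq_iff sum_distrib_left sum_distrib_right
      algebra_simps)

lemma csc_add: "csc c ((A::'n::finite op) + B) = csc c A + csc c B"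
  by (simp add: csc_def vec_eq_iff algebra_simps)

lemma csc_zero: "csc c (0::'n::finite op) = 0"
  by (simp add: csc_def vec_eq_iff)

lemma kraus_add: "kraus_map Ms (S + T) = kraus_map Ms S + kraus_map Ms (T::'n::finite op)"
  unfolding kraus_map_def
  by (induction Ms) (simp_all add: matrix_add_ldistrib mrd add_ac)

lemma kraus_csc: "kraus_map Ms (csc c T) = csc c (kraus_map Ms (T::'n::finite op))"
  unfolding kraus_map_def
  by (induction Ms) (simp_all add: csc_mult csc_add csc_zero)

lemma sl_lmul: "(A::'n::finite op) ** sum_list (map f Ms) = sum_list (map (\<lambda>M. A ** f M) Ms)"
  by (induction Ms) (simp_all add: matrix_add_ldistrib)

lemma sl_rmul: "sum_list (map (f::_\<Rightarrow>'n::finite op) Ms) ** (A::'n::finite op) = sum_list (map (\<lambda>M. f M ** A) Ms)"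
  by (induction Ms) (simp_all add: mrd)

lemma sl_entry: "sum_list (map f Ms) $ i $ j = sum_list (map (\<lambda>M. (f M :: 'n::finite op) $ i $ j) Ms)"
  by (induction Ms) simp_all

lemma diag_XX: "((X::'n::finite op) ** adj X) $ i $ i = complex_of_real (\<Sum>k\<in>UNIV. (cmod (X $ i $ k))^2)"
  unfolding of_real_sum complex_norm_square by (simp add: matrix_matrix_mult_def adj_def)

lemma sos_zero:
  assumes "sum_list (map (\<lambda>M. X M ** adj (X M)) Ms) = (0::'n::finite op)"
  shows "\<forall>M\<in>set Ms. X M = 0"
proof
  fix M assume M: "M \<in> set Ms"
  show "X M = 0"
  proof (rule ccontr)
    assume "X M \<noteq> 0"
    then obtain i k where ik: "X M $ i $ k \<noteq> 0" by (metis vec_eq_iff zero_index)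
    define g where "g = (\<lambda>N. (\<Sum>k\<in>UNIV. (cmod (X N $ i $ k))^2))"
    have "sum_list (map (\<lambda>M. X M ** adj (X M)) Ms) $ i $ i = sum_list (map (\<lambda>M. complex_of_real (g M)) Ms)"
      by (simp add: sl_entry diag_XX g_def)
    also have "\<dots> = complex_of_real (sum_list (map g Ms))"
      using sum_list_of_real[of "map g Ms"] by (simp add: o_def)
    finally have "complex_of_real (sum_list (map g Ms)) = 0"
      using assms by simp
    hence s0: "sum_list (map g Ms) = 0" by simp
    have nn: "\<And>N. 0 \<le> g N" unfolding g_def by (simp add: sum_nonneg)
    have "g M = 0" using sum_list_nonneg_eq_0_iff[of "map g Ms"] s0 nn M by auto
    hence "(cmod (X M $ i $ k))^2 = 0"
      unfolding g_def using sum_nonneg_eq_0_iff[of UNIV "\<lambda>k. (cmod (X M $ i $ k))^2"] by simp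
    thus False using ik by simp
  qed
qed

lemma key:
  assumes P: "orth_proj P" and Q: "orth_proj Q"
    and z: "Q ** kraus_map Ms P ** Q = 0"
  shows "\<forall>M\<in>set Ms. Q ** M ** P = (0::'n::finite op)"
proof -
  have PP: "P ** P = P" and aP: "adj P = P" and aQ: "adj Q = Q"
    using P Q by (auto simp: orth_proj_def)
  have e: "Q ** (M ** P ** adj M) ** Q = (Q ** M ** P) ** adj (Q ** M ** P)" for M
  proof -
    have a: "adj (Q ** M ** P) = P ** adj M ** Q"
      unfolding adj_mult aP aQ matrix_mul_assoc ..
    have "(Q ** M ** P) ** (P ** adj M ** Q) = Q ** M ** (P ** P) ** adj M ** Q"
      by (simp only: matrix_mul_assoc)
    also have "\<dots> = Q ** (M ** P ** adj M) ** Q"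
      by (simp only: PP matrix_mul_assoc)
    finally have c: "(Q ** M ** P) ** (P ** adj M ** Q) = Q ** (M ** P ** adj M) ** Q" .
    show ?thesis unfolding a using c by (rule sym)
  qed
  have "sum_list (map (\<lambda>M. (Q ** M ** P) ** adj (Q ** M ** P)) Ms)
      = sum_list (map (\<lambda>M. Q ** (M ** P ** adj M) ** Q) Ms)"
    unfolding e ..
  also have "\<dots> = Q ** kraus_map Ms P ** Q"
    unfolding kraus_map_def sl_lmul sl_rmul ..
  also have "\<dots> = 0" by (rule z)
  finally show ?thesis by (rule sos_zero)
qed

lemma lin_zero: "lin_on_blk PX PY f \<Longrightarrow> f 0 = 0"
proof -
  assume l: "lin_on_blk PX PY f"
  have "0 \<in> blk_space PX PY" by (simp add: blk_space_def)
  hence "f (0 + 0) = f 0 + f 0" using l unfolding lin_on_blk_def by blast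
  thus "f 0 = 0" by simp
qed

lemma lin_in: "lin_on_blk PX PY f \<Longrightarrow> PX ** T ** PY = T \<Longrightarrow> PX ** f T ** PY = f T"
  unfolding lin_on_blk_def blk_space_def by auto

theorem theorem1:
  fixes PA PB :: "'n::finite op" and Ms :: "'n op list"
  assumes "orth_proj PA" and "orth_proj PB"
    and "PA \<noteq> 0" and "PB \<noteq> 0"
    and "PA ** PB = 0" and "PA + PB = mat 1"
    and "kraus_set Ms"
  shows "PCDS PA PB (kraus_map Ms) \<longleftrightarrow>
         (\<forall>M\<in>set Ms. blk PA M PB = 0 \<and> blk PB M PA = 0)"
proof -
  have AA: "PA ** PA = PA" and BB: "PB ** PB = PB" and aA: "adj PA = PA" and aB: "adj PB = PB"
    using assms(1,2) by (auto simp: orth_proj_def)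
  have AB: "PA ** PB = 0" by fact
  have BA: "PB ** PA = 0"
    using arg_cong[OF AB, of adj] by (simp add: adj_mult aA aB adj_zero)
  show ?thesis
  proof
    assume "PCDS PA PB (kraus_map Ms)"
    then obtain FAA FBB FAB FBA where l: "lin_on_blk PA PA FAA" "lin_on_blk PB PB FBB"
        "lin_on_blk PA PB FAB" "lin_on_blk PB PA FBA"
      and eq: "\<And>T. kraus_map Ms T = FAA (blk PA T PA) + FBB (blk PB T PB)
                   + FAB (blk PA T PB) + FBA (blk PB T PA)"
      unfolding PCDS_def by blast
    have z: "FAA 0 = 0" "FBB 0 = 0" "FAB 0 = 0" "FBA 0 = 0" using l lin_zero by blast+
    have eA: "kraus_map Ms PA = FAA PA"
      using eq[of PA] z by (simp add: blk_def AA BA AB)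
    have eB: "kraus_map Ms PB = FBB PB"
      using eq[of PB] z by (simp add: blk_def BB BA AB)
    have iA: "PA ** kraus_map Ms PA ** PA = kraus_map Ms PA"
      using eA lin_in[OF l(1), of PA] AA by (simp)
    have iB: "PB ** kraus_map Ms PB ** PB = kraus_map Ms PB"
      using eB lin_in[OF l(2), of PB] BB by (simp)
    have "PB ** kraus_map Ms PA ** PB = PB ** (PA ** kraus_map Ms PA ** PA) ** PB"
      using iA by simp
    also have "\<dots> = (PB ** PA) ** kraus_map Ms PA ** (PA ** PB)"
      by (simp add: matrix_mul_assoc)
    finally have 1: "PB ** kraus_map Ms PA ** PB = 0" using AB BA by simp
    have "PA ** kraus_map Ms PB ** PA = PA ** (PB ** kraus_map Ms PB ** PB) ** PA"
      using iB by simp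
    also have "\<dots> = (PA ** PB) ** kraus_map Ms PB ** (PB ** PA)"
      by (simp add: matrix_mul_assoc)
    finally have 2: "PA ** kraus_map Ms PB ** PA = 0" using AB BA by simp
    show "\<forall>M\<in>set Ms. blk PA M PB = 0 \<and> blk PB M PA = 0"
      using key[OF assms(1,2) 1] key[OF assms(2,1) 2] by (simp add: blk_def)
  next
    assume H: "\<forall>M\<in>set Ms. blk PA M PB = 0 \<and> blk PB M PA = 0"
    have comm: "PX ** M = M ** PX" if M: "M \<in> set Ms" and PX: "PX = PA \<or> PX = PB" for M PX
    proof -
      have h1: "PA ** M ** PB = 0" "PB ** M ** PA = 0" using H M by (auto simp: blk_def)
      have cA: "PA ** M = M ** PA"
      proof -
        have "PA ** M = PA ** M ** (PA + PB)" using assms(6) by simp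
        also have "\<dots> = PA ** M ** PA" using h1 by (simp add: matrix_add_ldistrib)
        also have "\<dots> = (PA + PB) ** M ** PA" using h1 by (simp add: mrd)
        also have "\<dots> = M ** PA" using assms(6) by simp
        finally show ?thesis .
      qed
      have cB: "PB ** M = M ** PB"
      proof -
        have "PB ** M = PB ** M ** (PA + PB)" using assms(6) by simp
        also have "\<dots> = PB ** M ** PB" using h1 by (simp add: matrix_add_ldistrib)
        also have "\<dots> = (PA + PB) ** M ** PB" using h1 by (simp add: mrd)
        also have "\<dots> = M ** PB" using assms(6) by simp
        finally show ?thesis .
      qed
      show ?thesis using PX cA cB by auto
    qed
    have comm2: "adj M ** PX = PX ** adj M" if M: "M \<in> set Ms" and PX: "PX = PA \<or> PX = PB" for M PX
    proof -
      have "adj (PX ** M) = adj (M ** PX)" using comm[OF M PX] by simp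
      moreover have "adj PX = PX" using PX aA aB by auto
      ultimately show ?thesis by (simp add: adj_mult)
    qed
    have lin: "lin_on_blk PX PY (kraus_map Ms)" if PX: "PX = PA \<or> PX = PB" and PY: "PY = PA \<or> PY = PB" for PX PY
    proof -
      have "PX ** kraus_map Ms T ** PY = kraus_map Ms T" if T: "PX ** T ** PY = T" for T
      proof -
        have "\<And>M. M \<in> set Ms \<Longrightarrow> PX ** (M ** T ** adj M) ** PY = M ** T ** adj M"
        proof -
          fix M assume M: "M \<in> set Ms"
          have "PX ** (M ** T ** adj M) ** PY = (PX ** M) ** T ** (adj M ** PY)"
            by (simp add: matrix_mul_assoc)
          also have "\<dots> = M ** (PX ** T ** PY) ** adj M"
            using comm[OF M PX] comm2[OF M PY] by (simp add: matrix_mul_assoc)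
          finally show "PX ** (M ** T ** adj M) ** PY = M ** T ** adj M" using T by simp
        qed
        hence "sum_list (map (\<lambda>M. PX ** (M ** T ** adj M) ** PY) Ms) = sum_list (map (\<lambda>M. M ** T ** adj M) Ms)"
          by (metis (mono_tags, lifting) map_eq_conv)
        thus ?thesis unfolding kraus_map_def by (simp add: sl_lmul sl_rmul)
      qed
      thus ?thesis unfolding lin_on_blk_def blk_space_def by (simp add: kraus_add kraus_csc)
    qed
    have dec: "T = blk PA T PA + blk PB T PB + blk PA T PB + blk PB T PA" for T
    proof -
      have "T = (PA + PB) ** T ** (PA + PB)" using assms(6) by simp
      hence "T = PA ** T ** PA + PB ** T ** PA + (PA ** T ** PB + PB ** T ** PB)"
        by (simp only: mrd matrix_add_ldistrib)
      thus ?thesis unfolding blk_def by (simp add: add_ac)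
    qed
    have "kraus_map Ms T = kraus_map Ms (blk PA T PA) + kraus_map Ms (blk PB T PB)
             + kraus_map Ms (blk PA T PB) + kraus_map Ms (blk PB T PA)" for T
      by (subst dec[of T]) (simp add: kraus_add)
    thus "PCDS PA PB (kraus_map Ms)" unfolding PCDS_def using lin by blast
  qed
qed

end
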